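(* Let $n>1$ be an integer and let $j_0,\dots,j_{n-1}\in\mathbb Z/(n)$ (indices read in $\mathbb Z/(n)$) satisfy $j_i=j_{-i}$ for all $i$, such that for every nonzero $i\in\mathbb Z/(n)$ there exists $k\in\mathbb Z/(n)$ with $j_{i+k}\neq j_k$, and such that the additive subgroup generated by $j_0,\dots,j_{n-1}$ is $\mathbb Z/(n)$. Define $\sigma_{(i,j)}(k,l)=(k+j,\ l-j_{k+j-i})$ on $(\mathbb Z/(n))^2$ and $r((i,j),(k,l))=(\sigma_{(i,j)}(k,l),\sigma^{-1}_{\sigma_{(i,j)}(k,l)}(i,j))$. Then $((\mathbb Z/(n))^2,r)$ is an indecomposable and irretractable solution of the YBE. If moreover $j_0-j_i$ is invertible in $\mathbb Z/(n)$ for every nonzero $i$, then $((\mathbb Z/(n))^2,r)$ is a simple solution of the YBE.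
   Context: A solution of the YBE is a pair $(X,r)$, $X$ nonempty, $r:X\times X\to X\times X$, $r(x,y)=(\sigma_x(y),\gamma_y(x))$, with $r^2=\mathrm{id}$, all $\sigma_x,\gamma_x$ bijective, and $r_{12}r_{23}r_{12}=r_{23}r_{12}r_{23}$ on $X^3$. Indecomposable: $\langle\sigma_x\rangle\le \mathrm{Sym}_X$ transitive on $X$. Irretractable: $\sigma_x\ne\sigma_y$ for $x\ne y$. A homomorphism of solutions $f:(X,r)\to(Y,s)$ (with $s(t,z)=(\sigma'_t(z),\gamma'_z(t))$) is a map with $f(\sigma_x(y))=\sigma'_{f(x)}(f(y))$; $(X,r)$ is simple if $|X|>1$ and every surjective homomorphism of solutions $f:(X,r)\to(Y,s)$ is bijective or has $|Y|=1$. *)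

theory Defs
  imports Main "HOL-Algebra.Elementary_Groups" "HOL-Algebra.Generated_Groups"
begin

text \<open>For r(x,y) = (sigma_x(y), gamma_y(x)) we read off sigma and gamma from r.\<close>

definition ybe_sigma :: "('a \<times> 'a \<Rightarrow> 'a \<times> 'a) \<Rightarrow> 'a \<Rightarrow> 'a \<Rightarrow> 'a" where
  "ybe_sigma r x y = fst (r (x, y))"

definition ybe_gamma :: "('a \<times> 'a \<Rightarrow> 'a \<times> 'a) \<Rightarrow> 'a \<Rightarrow> 'a \<Rightarrow> 'a" where
  "ybe_gamma r y x = snd (r (x, y))"

definition r12 :: "('a \<times> 'a \<Rightarrow> 'a \<times> 'a) \<Rightarrow> 'a \<times> 'a \<times> 'a \<Rightarrow> 'a \<times> 'a \<times> 'a" where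
  "r12 r t = (case t of (a, b, c) \<Rightarrow> (fst (r (a, b)), snd (r (a, b)), c))"

definition r23 :: "('a \<times> 'a \<Rightarrow> 'a \<times> 'a) \<Rightarrow> 'a \<times> 'a \<times> 'a \<Rightarrow> 'a \<times> 'a \<times> 'a" where
  "r23 r t = (case t of (a, b, c) \<Rightarrow> (a, fst (r (b, c)), snd (r (b, c))))"

definition is_solution :: "'a set \<Rightarrow> ('a \<times> 'a \<Rightarrow> 'a \<times> 'a) \<Rightarrow> bool" where
  "is_solution X r \<longleftrightarrow>
     X \<noteq> {} \<and>
     (\<forall>p \<in> X \<times> X. r p \<in> X \<times> X) \<and>
     (\<forall>p \<in> X \<times> X. r (r p) = p) \<and>
     (\<forall>x \<in> X. bij_betw (ybe_sigma r x) X X) \<and>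
     (\<forall>x \<in> X. bij_betw (ybe_gamma r x) X X) \<and>
     (\<forall>t \<in> X \<times> X \<times> X. r12 r (r23 r (r12 r t)) = r23 r (r12 r (r23 r t)))"

text \<open>Orbit of x under the permutation group generated by all sigma_z (z in X):
  closure under the sigma_z and their inverses (inverses taken as permutations of X).\<close>

inductive_set sigma_orbit :: "'a set \<Rightarrow> ('a \<times> 'a \<Rightarrow> 'a \<times> 'a) \<Rightarrow> 'a \<Rightarrow> 'a set"
  for X r x where
  base: "x \<in> sigma_orbit X r x"
| step: "y \<in> sigma_orbit X r x \<Longrightarrow> z \<in> X \<Longrightarrow> ybe_sigma r z y \<in> sigma_orbit X r x"
| step_inv: "y \<in> sigma_orbit X r x \<Longrightarrow> z \<in> X \<Longrightarrow>
             inv_into X (ybe_sigma r z) y \<in> sigma_orbit X r x"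

definition indecomposable :: "'a set \<Rightarrow> ('a \<times> 'a \<Rightarrow> 'a \<times> 'a) \<Rightarrow> bool" where
  "indecomposable X r \<longleftrightarrow> (\<forall>x \<in> X. \<forall>y \<in> X. y \<in> sigma_orbit X r x)"

definition irretractable :: "'a set \<Rightarrow> ('a \<times> 'a \<Rightarrow> 'a \<times> 'a) \<Rightarrow> bool" where
  "irretractable X r \<longleftrightarrow>
     (\<forall>x \<in> X. \<forall>y \<in> X. x \<noteq> y \<longrightarrow> (\<exists>z \<in> X. ybe_sigma r x z \<noteq> ybe_sigma r y z))"

definition sol_hom :: "'a set \<Rightarrow> ('a \<times> 'a \<Rightarrow> 'a \<times> 'a) \<Rightarrow> 'b set \<Rightarrow> ('b \<times> 'b \<Rightarrow> 'b \<times> 'b)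
                       \<Rightarrow> ('a \<Rightarrow> 'b) \<Rightarrow> bool" where
  "sol_hom X r Y s f \<longleftrightarrow>
     (\<forall>x \<in> X. f x \<in> Y) \<and>
     (\<forall>x \<in> X. \<forall>y \<in> X. f (ybe_sigma r x y) = ybe_sigma s (f x) (f y))"

text \<open>Simplicity, relative to target solutions whose underlying set lives in the type 'b.
  In the main theorem 'b is a free (hence universally quantified) type variable.\<close>

definition simple_sol :: "'b itself \<Rightarrow> 'a set \<Rightarrow> ('a \<times> 'a \<Rightarrow> 'a \<times> 'a) \<Rightarrow> bool" where
  "simple_sol (_ :: 'b itself) X r \<longleftrightarrow>
     card X > 1 \<and>
     (\<forall>(Y :: 'b set) s f. is_solution Y s \<and> sol_hom X r Y s f \<and> f ` X = Y
        \<longrightarrow> bij_betw f X Y \<or> card Y = 1)"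

definition zn :: "nat \<Rightarrow> int set" where
  "zn n = {0..<int n}"

definition sig6 :: "nat \<Rightarrow> (int \<Rightarrow> int) \<Rightarrow> int \<times> int \<Rightarrow> int \<times> int \<Rightarrow> int \<times> int" where
  "sig6 n J x y = (case x of (i, a) \<Rightarrow> case y of (k, l) \<Rightarrow>
      ((k + a) mod int n, (l - J ((k + a - i) mod int n)) mod int n))"

definition r6 :: "nat \<Rightarrow> (int \<Rightarrow> int) \<Rightarrow> (int \<times> int) \<times> (int \<times> int) \<Rightarrow> (int \<times> int) \<times> (int \<times> int)" where
  "r6 n J p = (case p of (x, y) \<Rightarrow>
      (sig6 n J x y, inv_into (zn n \<times> zn n) (sig6 n J (sig6 n J x y)) x))"

end

theory Submission
  imports Defs
begin

locale sol6 =
  fixes n :: nat and J :: "int \<Rightarrow> int"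
  assumes n_gt: "n > 1"
    and J_range: "\<forall>i \<in> zn n. J i \<in> zn n"
    and J_sym: "\<forall>i \<in> zn n. J ((- i) mod int n) = J i"
begin

abbreviation "N \<equiv> int n"
abbreviation "X \<equiv> zn n \<times> zn n"

lemma N_pos: "N > 0" using n_gt by simp

lemma zn_iff: "t \<in> zn n \<longleftrightarrow> 0 \<le> t \<and> t < N" by (simp add: zn_def)

lemma zero_zn[simp]: "0 \<in> zn n" using N_pos by (simp add: zn_iff)

lemma mod_zn[simp]: "t mod N \<in> zn n" using N_pos by (simp add: zn_iff)

lemma zn_mod[simp]: "t \<in> zn n \<Longrightarrow> t mod N = t" by (simp add: zn_iff)

definition Jp :: "int \<Rightarrow> int" where "Jp t = J (t mod N)"

lemma Jp_range: "Jp t \<in> zn n" using J_range by (simp add: Jp_def)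

lemma Jp_mod[simp]: "Jp t mod N = Jp t" using Jp_range zn_mod by blast

lemma Jp_cong: "a mod N = b mod N \<Longrightarrow> Jp a = Jp b" by (simp add: Jp_def)

lemma Jp_modarg[simp]: "Jp (t mod N) = Jp t" by (simp add: Jp_def)

lemma Jp_neg: "Jp (- t) = Jp t"
proof -
  have "J ((- (t mod N)) mod N) = J (t mod N)" using J_sym by simp
  moreover have "(- (t mod N)) mod N = (- t) mod N" by (simp add: mod_minus_eq)
  ultimately show ?thesis by (simp add: Jp_def)
qed

lemma Jp_neg': "Jp (a - b) = Jp (b - a)"
  using Jp_neg[of "b - a"] by simp

definition md :: "int \<times> int \<Rightarrow> int \<times> int" where
  "md p = (fst p mod N, snd p mod N)"

lemma md_simp[simp]: "md (a, b) = (a mod N, b mod N)" by (simp add: md_def)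

lemma md_X[simp]: "md p \<in> X" by (cases p) simp

lemma md_id[simp]: "p \<in> X \<Longrightarrow> md p = p" by (cases p) auto

definition S :: "int \<times> int \<Rightarrow> int \<times> int \<Rightarrow> int \<times> int" where
  "S x y = (fst y + snd x, snd y - Jp (fst y + snd x - fst x))"

definition G :: "int \<times> int \<Rightarrow> int \<times> int \<Rightarrow> int \<times> int" where
  "G x y = (fst x + Jp (fst y + snd x - fst x) - snd y, snd x + Jp (fst y + snd x - fst x))"

lemma S_simp[simp]: "S (i, a) (k, l) = (k + a, l - Jp (k + a - i))" by (simp add: S_def)
lemma G_simp[simp]: "G (i, a) (k, l) = (i + Jp (k + a - i) - l, a + Jp (k + a - i))" by (simp add: G_def)

lemma sig6_S: "sig6 n J x y = md (S x y)"
  by (cases x; cases y) (simp add: sig6_def Jp_def)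

lemma eq3: "(k mod N + a mod N - i mod N) mod N = (k + a - i) mod N"
  by (intro mod_diff_cong mod_add_cong) simp_all

lemma S_cong: "md (S (md x) (md y)) = md (S x y)"
proof (cases x; cases y)
  fix i a k l assume [simp]: "x = (i,a)" "y = (k,l)"
  show ?thesis using eq3[of k a i] Jp_cong[OF eq3[of k a i]]
    by (simp add: mod_simps)
qed

lemma G_cong: "md (G (md x) (md y)) = md (G x y)"
proof (cases x; cases y)
  fix i a k l assume [simp]: "x = (i,a)" "y = (k,l)"
  have j: "Jp (k mod N + a mod N - i mod N) = Jp (k + a - i)" by (rule Jp_cong[OF eq3])
  have "(i mod N + Jp (k + a - i) - l mod N) mod N = (i + Jp (k + a - i) - l) mod N"
    by (intro mod_diff_cong mod_add_cong) simp_all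
  then show ?thesis using j by (simp add: mod_simps)
qed

definition sinv :: "int \<times> int \<Rightarrow> int \<times> int \<Rightarrow> int \<times> int" where
  "sinv x y = md (fst y - snd x, snd y + Jp (fst y - fst x))"

lemma sinv_simp: "sinv (i,a) (u,v) = ((u - a) mod N, (v + Jp (u - i)) mod N)"
  by (simp add: sinv_def)

lemma sig_in: "sig6 n J x y \<in> X" by (simp add: sig6_S)
lemma sinv_in: "sinv x y \<in> X" by (simp add: sinv_def)

lemma sinv_sig: "y \<in> X \<Longrightarrow> sinv x (sig6 n J x y) = y"
proof (cases x; cases y)
  fix i a k l assume [simp]: "x = (i,a)" "y = (k,l)" and y: "y \<in> X"
  have "Jp ((k + a) mod N - i) = Jp (k + a - i)" by (rule Jp_cong) (simp add: mod_simps)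
  then show ?thesis using y by (simp add: sig6_S sinv_simp mod_simps)
qed

lemma sig_sinv: "y \<in> X \<Longrightarrow> sig6 n J x (sinv x y) = y"
proof (cases x; cases y)
  fix i a k l assume [simp]: "x = (i,a)" "y = (k,l)" and y: "y \<in> X"
  have "((k - a) mod N + a - i) mod N = ((k - a) mod N + (a - i)) mod N" by (simp add: add_diff_eq)
  also have "\<dots> = (k - i) mod N" by (simp add: mod_add_left_eq)
  finally have "Jp ((k - a) mod N + a - i) = Jp (k - i)" by (rule Jp_cong)
  then show ?thesis using y by (simp add: sig6_S sinv_simp mod_simps)
qed

lemma sig_inj: "inj_on (sig6 n J x) X"
  by (metis inj_on_inverseI sinv_sig)

lemma inv_sig: "y \<in> X \<Longrightarrow> inv_into X (sig6 n J x) y = sinv x y"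
  by (rule inv_into_f_eq[OF sig_inj sinv_in sig_sinv])

lemma sig_bij: "bij_betw (sig6 n J x) X X"
proof (rule bij_betw_byWitness[where f'="sinv x"])
  show "sig6 n J x ` X \<subseteq> X" using sig_in by blast
  show "sinv x ` X \<subseteq> X" using sinv_in by blast
qed (auto simp: sinv_sig sig_sinv)

lemma sinv_G: "x \<in> X \<Longrightarrow> sinv (md (S x y)) x = md (G x y)"
proof (cases x; cases y)
  fix i a k l assume [simp]: "x = (i,a)" "y = (k,l)" and x: "x \<in> X"
  have "Jp (i - (k + a) mod N) = Jp (k + a - i)"
    using Jp_neg'[of i "k+a"] by (metis Jp_cong mod_diff_right_eq)
  then show ?thesis using x by (simp add: sinv_simp mod_simps diff_diff_eq2)
qed

lemma r6_eq: "x \<in> X \<Longrightarrow> y \<in> X \<Longrightarrow> r6 n J (x, y) = (md (S x y), md (G x y))"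
proof -
  assume x: "x \<in> X" and y: "y \<in> X"
  have "r6 n J (x, y) = (sig6 n J x y, sinv (sig6 n J x y) x)"
    by (simp add: r6_def inv_sig x)
  then show ?thesis by (simp add: sig6_S sinv_G x)
qed

lemma S_md1[simp]: "md (S (md x) y) = md (S x y)"
  by (metis S_cong md_X md_id)
lemma S_md2[simp]: "md (S x (md y)) = md (S x y)"
  by (metis S_cong md_X md_id)
lemma G_md1[simp]: "md (G (md x) y) = md (G x y)"
  by (metis G_cong md_X md_id)
lemma G_md2[simp]: "md (G x (md y)) = md (G x y)"
  by (metis G_cong md_X md_id)

lemma r6_inv: "x \<in> X \<Longrightarrow> y \<in> X \<Longrightarrow> r6 n J (r6 n J (x, y)) = (x, y)"
proof (cases x; cases y)
  fix i a k l assume [simp]: "x = (i,a)" "y = (k,l)" and x: "x \<in> X" and y: "y \<in> X"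
  have j: "Jp (i - (k + a)) = Jp (k + a - i)" by (rule Jp_neg')
  have "r6 n J (r6 n J (x, y)) = (md (S (S x y) (G x y)), md (G (S x y) (G x y)))"
    using x y by (simp add: r6_eq del: md_simp S_simp G_simp)
  also have "\<dots> = (x, y)" using x y j by simp
  finally show ?thesis .
qed

lemma braid: "x1 \<in> X \<Longrightarrow> x2 \<in> X \<Longrightarrow> x3 \<in> X \<Longrightarrow>
   r12 (r6 n J) (r23 (r6 n J) (r12 (r6 n J) (x1, x2, x3))) = r23 (r6 n J) (r12 (r6 n J) (r23 (r6 n J) (x1, x2, x3)))"
proof (cases x1; cases x2; cases x3)
  fix i1 a1 i2 a2 i3 a3 assume [simp]: "x1 = (i1,a1)" "x2 = (i2,a2)" "x3 = (i3,a3)"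
    and x: "x1 \<in> X" "x2 \<in> X" "x3 \<in> X"
  have L: "r12 (r6 n J) (r23 (r6 n J) (r12 (r6 n J) (x1, x2, x3))) = 
    (md (S (S x1 x2) (S (G x1 x2) x3)), md (G (S x1 x2) (S (G x1 x2) x3)), md (G (G x1 x2) x3))"
    using x by (simp add: r12_def r23_def r6_eq del: md_simp S_simp G_simp)
  have R: "r23 (r6 n J) (r12 (r6 n J) (r23 (r6 n J) (x1, x2, x3))) =
     (md (S x1 (S x2 x3)), md (S (G x1 (S x2 x3)) (G x2 x3)), md (G (G x1 (S x2 x3)) (G x2 x3)))"
    using x by (simp add: r12_def r23_def r6_eq del: md_simp S_simp G_simp)
  have e1: "S (S x1 x2) (S (G x1 x2) x3) = S x1 (S x2 x3)" by (simp add: algebra_simps)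
  have e2: "G (S x1 x2) (S (G x1 x2) x3) = S (G x1 (S x2 x3)) (G x2 x3)" by (simp add: algebra_simps)
  have e3: "G (G x1 x2) x3 = G (G x1 (S x2 x3)) (G x2 x3)" by (simp add: algebra_simps)
  show ?thesis by (simp only: L R e1 e2 e3)
qed

definition GE :: "int \<times> int \<Rightarrow> int \<times> int \<Rightarrow> int \<times> int" where
  "GE y p = (fst p + snd y - Jp (fst y + snd p - fst p - snd y), snd p - Jp (fst y + snd p - fst p - snd y))"

lemma GE_simp[simp]: "GE (k, l) (s, t) = (s + l - Jp (k + t - s - l), t - Jp (k + t - s - l))"
  by (simp add: GE_def)

lemma GE_md: "md (GE y (md p)) = md (GE y p)"
proof (cases y; cases p)
  fix k l s t assume [simp]: "y = (k,l)" "p = (s,t)"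
  have e: "(k + t mod N - s mod N - l) mod N = (k + t - s - l) mod N"
    by (intro mod_diff_cong mod_add_cong) simp_all
  have j: "Jp (k + t mod N - s mod N - l) = Jp (k + t - s - l)" by (rule Jp_cong[OF e])
  have "(s mod N + l - Jp (k + t - s - l)) mod N = (s + l - Jp (k + t - s - l)) mod N"
    by (intro mod_diff_cong mod_add_cong) simp_all
  then show ?thesis using j by (simp add: mod_simps)
qed

lemma GE_G: "GE y (G x y) = x"
  by (cases x; cases y) (simp add: algebra_simps)

lemma G_GE: "G (GE y p) y = p"
  by (cases p; cases y) (simp add: algebra_simps)

lemma sigma_eq: "ybe_sigma (r6 n J) x = sig6 n J x"
  by (rule ext) (simp add: ybe_sigma_def r6_def)

lemma gamma_eq: "x \<in> X \<Longrightarrow> y \<in> X \<Longrightarrow> ybe_gamma (r6 n J) y x = md (G x y)"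
  by (simp add: ybe_gamma_def r6_eq)

lemma gamma_bij: "y \<in> X \<Longrightarrow> bij_betw (ybe_gamma (r6 n J) y) X X"
proof -
  assume y: "y \<in> X"
  have "bij_betw (\<lambda>x. md (G x y)) X X"
  proof (rule bij_betw_byWitness[where f'="\<lambda>p. md (GE y p)"])
    show "\<forall>a\<in>X. md (GE y (md (G a y))) = a"
      by (simp only: GE_md GE_G) simp
    show "\<forall>a\<in>X. md (G (md (GE y a)) y) = a"
    proof
      fix a assume a: "a \<in> X"
      have "md (G (md (GE y a)) y) = md (G (GE y a) y)" by (rule G_md1)
      also have "\<dots> = a" using a by (simp only: G_GE) simp
      finally show "md (G (md (GE y a)) y) = a" .
    qed
  qed (use md_X in blast)+
  then show ?thesis
    by (rule bij_betw_cong[THEN iffD1, rotated]) (simp add: gamma_eq y)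
qed

lemma is_sol: "is_solution X (r6 n J)"
  unfolding is_solution_def
proof (intro conjI ballI)
  show "X \<noteq> {}" using N_pos by (auto simp: zn_def)
next
  fix p assume "p \<in> X \<times> X" then show "r6 n J p \<in> X \<times> X" by (auto simp: r6_eq)
next
  fix p assume "p \<in> X \<times> X" then show "r6 n J (r6 n J p) = p" by (auto simp: r6_inv)
next
  fix x assume "x \<in> X" then show "bij_betw (ybe_sigma (r6 n J) x) X X" by (simp add: sigma_eq sig_bij)
next
  fix x assume "x \<in> X" then show "bij_betw (ybe_gamma (r6 n J) x) X X" by (rule gamma_bij)
next
  fix t assume "t \<in> X \<times> X \<times> X"
  then show "r12 (r6 n J) (r23 (r6 n J) (r12 (r6 n J) t)) = r23 (r6 n J) (r12 (r6 n J) (r23 (r6 n J) t))"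
    by (auto simp del: md_simp S_simp G_simp intro!: braid)
qed

lemma orbit_X: "x \<in> X \<Longrightarrow> y \<in> sigma_orbit X (r6 n J) x \<Longrightarrow> y \<in> X"
  by (rotate_tac, induction rule: sigma_orbit.induct) (auto simp: sigma_eq sig_in inv_sig sinv_in)

lemma orb_down: assumes x: "x \<in> X" and o: "(k, l) \<in> sigma_orbit X (r6 n J) x"
  shows "(k, (l - Jp m) mod N) \<in> sigma_orbit X (r6 n J) x"
proof -
  have kl: "(k, l) \<in> X" using orbit_X[OF x o] .
  have z: "((k - m) mod N, 0) \<in> X" using N_pos by (simp add: zn_iff)
  have "Jp (k + 0 - (k - m) mod N) = Jp m" by (rule Jp_cong) (simp add: mod_diff_right_eq)
  then have "sig6 n J ((k - m) mod N, 0) (k, l) = (k, (l - Jp m) mod N)"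
    using kl by (simp add: sig6_S)
  then show ?thesis using sigma_orbit.step[OF o z] by (simp add: sigma_eq)
qed

lemma orb_up: assumes x: "x \<in> X" and o: "(k, l) \<in> sigma_orbit X (r6 n J) x"
  shows "(k, (l + Jp m) mod N) \<in> sigma_orbit X (r6 n J) x"
proof -
  have kl: "(k, l) \<in> X" using orbit_X[OF x o] .
  have z: "((k - m) mod N, 0) \<in> X" using N_pos by (simp add: zn_iff)
  have "Jp (k - (k - m) mod N) = Jp m" by (rule Jp_cong) (simp add: mod_diff_right_eq)
  then have "inv_into X (sig6 n J ((k - m) mod N, 0)) (k, l) = (k, (l + Jp m) mod N)"
    using kl by (simp add: inv_sig sinv_simp)
  then show ?thesis using sigma_orbit.step_inv[OF o z] by (simp add: sigma_eq)
qed

lemma orb_right: assumes x: "x \<in> X" and o: "(k, l) \<in> sigma_orbit X (r6 n J) x"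
  shows "\<exists>l'. ((k + a) mod N, l') \<in> sigma_orbit X (r6 n J) x"
proof -
  have z: "(0, a mod N) \<in> X" using N_pos by (simp add: zn_iff)
  have "fst (sig6 n J (0, a mod N) (k, l)) = (k + a) mod N"
    by (simp add: sig6_S mod_simps)
  then show ?thesis using sigma_orbit.step[OF o z] by (metis prod.collapse sigma_eq)
qed

lemma carrier_G: "carrier (integer_mod_group n) = zn n"
  using N_pos by (simp add: carrier_integer_mod_group zn_def)

lemma gen_shift:
  assumes x: "x \<in> X" and g: "g \<in> generate (integer_mod_group n) (J ` zn n)"
  shows "\<forall>k l. (k, l) \<in> sigma_orbit X (r6 n J) x \<longrightarrow> (k, (l + g) mod N) \<in> sigma_orbit X (r6 n J) x"
  using g
proof (induction rule: generate.induct)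
  case one
  then show ?case using orbit_X[OF x] by fastforce
next
  case (incl h)
  then obtain m where m: "m \<in> zn n" "h = J m" by blast
  then have "h = Jp m" by (simp add: Jp_def)
  then show ?case using orb_up[OF x] by blast
next
  case (inv h)
  then obtain m where m: "m \<in> zn n" "h = J m" by blast
  then have hm: "h = Jp m" by (simp add: Jp_def)
  have "h \<in> carrier (integer_mod_group n)" using Jp_range hm carrier_G by simp
  then have "inv\<^bsub>integer_mod_group n\<^esub> h = (- h) mod N" by simp
  moreover have "\<And>l. (l + (- h) mod N) mod N = (l - h) mod N" by (simp add: mod_simps)
  ultimately show ?case using orb_down[OF x] hm by simp
next
  case (eng h1 h2)
  show ?case
  proof (intro allI impI)
    fix k l assume "(k, l) \<in> sigma_orbit X (r6 n J) x"
    then have "(k, ((l + h1) mod N + h2) mod N) \<in> sigma_orbit X (r6 n J) x" using eng.IH by blast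
    moreover have "((l + h1) mod N + h2) mod N = (l + (h1 + h2) mod N) mod N" by (simp add: mod_simps ac_simps)
    ultimately show "(k, (l + h1 \<otimes>\<^bsub>integer_mod_group n\<^esub> h2) mod N) \<in> sigma_orbit X (r6 n J) x" by simp
  qed
qed

lemma indec:
  assumes J_gen: "generate (integer_mod_group n) (J ` zn n) = carrier (integer_mod_group n)"
  shows "indecomposable X (r6 n J)"
  unfolding indecomposable_def
proof (intro ballI)
  fix x y assume x: "x \<in> X" and y: "y \<in> X"
  obtain k0 l0 where x0: "x = (k0, l0)" by (cases x)
  obtain k' l' where y0: "y = (k', l')" by (cases y)
  have "(k0, l0) \<in> sigma_orbit X (r6 n J) x" using x0 sigma_orbit.base by simp
  then obtain l1 where "((k0 + (k' - k0)) mod N, l1) \<in> sigma_orbit X (r6 n J) x"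
    using orb_right[OF x] by blast
  then have o1: "(k', l1) \<in> sigma_orbit X (r6 n J) x" using y y0 by simp
  have "(l' - l1) mod N \<in> generate (integer_mod_group n) (J ` zn n)" using J_gen carrier_G by simp
  from gen_shift[OF x this] o1 have "(k', (l1 + (l' - l1) mod N) mod N) \<in> sigma_orbit X (r6 n J) x" by blast
  moreover have "(l1 + (l' - l1) mod N) mod N = l'" using y y0 by (simp add: mod_simps)
  ultimately show "y \<in> sigma_orbit X (r6 n J) x" using y0 by simp
qed

lemma neg_inj: "u \<in> zn n \<Longrightarrow> v \<in> zn n \<Longrightarrow> (- u) mod N = (- v) mod N \<Longrightarrow> u = v"
  by (metis mod_minus_eq minus_minus zn_mod)

lemma irr:
  assumes J_shift: "\<forall>i \<in> zn n. i \<noteq> 0 \<longrightarrow> (\<exists>k \<in> zn n. J ((i + k) mod int n) \<noteq> J k)"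
  shows "irretractable X (r6 n J)"
  unfolding irretractable_def sigma_eq
proof (intro ballI impI)
  fix x y assume x: "x \<in> X" and y: "y \<in> X" and xy: "x \<noteq> y"
  obtain i a where x0: "x = (i, a)" by (cases x)
  obtain i' a' where y0: "y = (i', a')" by (cases y)
  show "\<exists>z\<in>X. sig6 n J x z \<noteq> sig6 n J y z"
  proof (cases "a = a'")
    case False
    have "(0, 0) \<in> X" using N_pos by (simp add: zn_iff)
    moreover have "sig6 n J x (0,0) \<noteq> sig6 n J y (0,0)"
      using False x y x0 y0 by (simp add: sig6_S)
    ultimately show ?thesis by blast
  next
    case True
    then have ii: "i \<noteq> i'" using xy x0 y0 by simp
    define d where "d = (i - i') mod N"
    have d0: "d \<noteq> 0"
    proof
      assume "d = 0"
      then have "N dvd (i - i')" by (simp add: dvd_eq_mod_eq_0 d_def)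
      then have "i mod N = i' mod N" by (simp add: mod_eq_dvd_iff)
      then show False using ii x y x0 y0 by simp
    qed
    obtain m where m: "m \<in> zn n" "J ((d + m) mod N) \<noteq> J m" using J_shift d0 unfolding d_def by auto
    define k where "k = (m - a + i) mod N"
    have z: "(k, 0) \<in> X" using N_pos by (simp add: zn_iff k_def)
    have j1: "Jp (k + a - i) = J m"
    proof -
      have "(k + a - i) mod N = (m - a + i + a - i) mod N" unfolding k_def
        by (intro mod_diff_cong mod_add_cong) simp_all
      then have "Jp (k + a - i) = Jp m" by (intro Jp_cong) simp
      then show ?thesis using m by (simp add: Jp_def)
    qed
    have j2: "Jp (k + a - i') = J ((d + m) mod N)"
    proof -
      have "(k + a - i') mod N = (m - a + i + a - i') mod N" unfolding k_def
        by (intro mod_diff_cong mod_add_cong) simp_all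
      also have "\<dots> = ((i - i') + m) mod N" by (simp add: algebra_simps)
      also have "\<dots> = (d + m) mod N" unfolding d_def by (simp add: mod_add_left_eq)
      finally have "Jp (k + a - i') = Jp (d + m)" by (rule Jp_cong)
      then show ?thesis by (simp add: Jp_def)
    qed
    have r1: "J m \<in> zn n" "J ((d + m) mod N) \<in> zn n" using J_range m by auto
    have "sig6 n J x (k, 0) \<noteq> sig6 n J y (k, 0)"
      using x0 y0 True j1 j2 neg_inj[OF r1] m(2) by (auto simp: sig6_S)
    then show ?thesis using z by blast
  qed
qed

lemma choose_t: assumes du: "(d * u) mod N = 1"
  shows "\<exists>t::nat. \<forall>w. (w + int t * d) mod N = (w + e) mod N"
proof -
  define t where "t = nat ((e * u) mod N)"
  have it: "int t = (e * u) mod N" using N_pos by (simp add: t_def)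
  have "(int t * d) mod N = (e * u * d) mod N" by (simp add: it mod_mult_left_eq)
  also have "\<dots> = (e * (d * u)) mod N" by (simp add: ac_simps)
  also have "\<dots> = (e * ((d * u) mod N)) mod N" by (simp add: mod_mult_right_eq)
  also have "\<dots> = e mod N" using du by simp
  finally have "\<forall>w. (w + int t * d) mod N = (w + e) mod N" by (intro allI mod_add_cong) simp_all
  then show ?thesis by blast
qed

lemma reach: assumes du: "(d * u) mod N = 1"
  and step: "\<forall>w\<in>zn n. P w = P ((w + d) mod N)"
  and w: "w \<in> zn n" and w': "w' \<in> zn n"
  shows "P w = P w'"
proof -
  have it: "P w = P ((w + int t * d) mod N)" for t
  proof (induction t)
    case 0 then show ?case using w by simp
  next
    case (Suc t)
    have "P ((w + int t * d) mod N) = P (((w + int t * d) mod N + d) mod N)" using step mod_zn by blast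
    also have "((w + int t * d) mod N + d) mod N = (w + int (Suc t) * d) mod N"
    proof -
      have "((w + int t * d) mod N + d) mod N = (w + int t * d + d) mod N" by (simp add: mod_add_left_eq)
      also have "w + int t * d + d = w + int (Suc t) * d" by (simp add: algebra_simps)
      finally show ?thesis .
    qed
    finally show ?case using Suc by simp
  qed
  obtain t :: nat where "(w + int t * d) mod N = (w + (w' - w)) mod N" using choose_t[OF du, of "w' - w"] by blast
  then show ?thesis using it[of t] w' by simp
qed

lemma Jp0[simp]: "Jp 0 = J 0" by (simp add: Jp_def)

lemma Jp_modadd: "Jp (k mod N + a - i) = Jp (k + a - i)"
  by (rule Jp_cong) (intro mod_diff_cong mod_add_cong; simp)

lemma Jp_modadd2: "Jp (a + k mod N - i) = Jp (a + k - i)"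
  by (rule Jp_cong) (intro mod_diff_cong mod_add_cong; simp)

lemma zn_ne: "i \<in> zn n \<Longrightarrow> i' \<in> zn n \<Longrightarrow> i \<noteq> i' \<Longrightarrow> (i - i') mod N \<noteq> 0"
proof
  assume "i \<in> zn n" "i' \<in> zn n" "i \<noteq> i'" "(i - i') mod N = 0"
  then have "N dvd (i - i')" by (simp add: dvd_eq_mod_eq_0)
  then have "i mod N = i' mod N" by (simp add: mod_eq_dvd_iff)
  then show False using \<open>i \<in> zn n\<close> \<open>i' \<in> zn n\<close> \<open>i \<noteq> i'\<close> by simp
qed

context
  fixes Y :: "'b set" and s :: "'b \<times> 'b \<Rightarrow> 'b \<times> 'b" and f :: "int \<times> int \<Rightarrow> 'b"
  assumes Ysol: "is_solution Y s" and hom: "sol_hom X (r6 n J) Y s f"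
    and Hinv: "\<forall>i \<in> zn n. i \<noteq> 0 \<longrightarrow> (\<exists>u \<in> zn n. ((J 0 - J i) * u) mod int n = 1)"
begin

lemma fX: "x \<in> X \<Longrightarrow> f x \<in> Y" using hom unfolding sol_hom_def by blast

lemma hom': "x \<in> X \<Longrightarrow> y \<in> X \<Longrightarrow> f (sig6 n J x y) = ybe_sigma s (f x) (f y)"
  using hom unfolding sol_hom_def sigma_eq by blast

lemma hA: "x \<in> X \<Longrightarrow> x' \<in> X \<Longrightarrow> y \<in> X \<Longrightarrow> f x = f x' \<Longrightarrow> f (sig6 n J x y) = f (sig6 n J x' y)"
  by (simp only: hom')

lemma hB: "x \<in> X \<Longrightarrow> y \<in> X \<Longrightarrow> y' \<in> X \<Longrightarrow> f y = f y' \<Longrightarrow> f (sig6 n J x y) = f (sig6 n J x y')"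
  by (simp only: hom')

lemma hC: assumes "x \<in> X" "y \<in> X" "y' \<in> X" "f (sig6 n J x y) = f (sig6 n J x y')"
  shows "f y = f y'"
proof -
  have b: "bij_betw (ybe_sigma s (f x)) Y Y" using Ysol fX[OF assms(1)] by (simp add: is_solution_def)
  have "ybe_sigma s (f x) (f y) = ybe_sigma s (f x) (f y')"
    using assms by (simp only: hom')
  then show ?thesis using bij_betw_imp_inj_on[OF b] fX assms by (meson inj_onD)
qed

lemma hAinv: assumes "x \<in> X" "x' \<in> X" "w \<in> X" "f x = f x'"
  shows "f (sinv x w) = f (sinv x' w)"
proof -
  have "f (sig6 n J x (sinv x' w)) = f (sig6 n J x' (sinv x' w))" by (rule hA) (use assms sinv_in in auto)
  also have "\<dots> = f (sig6 n J x (sinv x w))" using assms by (simp add: sig_sinv)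
  finally have "f (sinv x' w) = f (sinv x w)" by (rule hC[OF assms(1) sinv_in sinv_in])
  then show ?thesis by (rule sym)
qed

lemma const_from_row:
  assumes p: "p \<in> zn n" and p': "p' \<in> zn n" and c: "c \<in> zn n" and pp: "p \<noteq> p'"
    and fe: "f (p, c) = f (p', c)"
  shows "\<forall>y\<in>X. f y = f (0, 0)"
proof -
  define idx where "idx = (p - p') mod N"
  have idx0: "idx \<noteq> 0" using zn_ne[OF p p' pp] by (simp add: idx_def)
  obtain u where u: "((J 0 - J idx) * u) mod N = 1" using Hinv idx0 mod_zn idx_def by blast
  have step: "\<forall>w\<in>zn n. f (p, w) = f (p, (w + (J 0 - J idx)) mod N)"
  proof
    fix w assume w: "w \<in> zn n"
    define y where "y = ((p - c) mod N, (w + J 0) mod N)"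
    have yX: "y \<in> X" by (simp add: y_def)
    have "Jp ((p - c) mod N + c - p) = J 0" by (simp add: Jp_modadd)
    then have s1: "sig6 n J (p, c) y = (p, w)" using p w by (simp add: y_def sig6_S mod_simps)
    have "Jp ((p - c) mod N + c - p') = Jp (p - c + c - p')" by (rule Jp_modadd)
    then have "Jp ((p - c) mod N + c - p') = J idx" by (simp add: idx_def Jp_def)
    then have s2: "sig6 n J (p', c) y = (p, (w + (J 0 - J idx)) mod N)" using p w
      by (simp add: y_def sig6_S mod_simps algebra_simps)
    show "f (p, w) = f (p, (w + (J 0 - J idx)) mod N)"
      using hA[of "(p,c)" "(p',c)" y] p p' c yX fe s1 s2 by simp
  qed
  have colp: "\<And>w w'. w \<in> zn n \<Longrightarrow> w' \<in> zn n \<Longrightarrow> f (p, w) = f (p, w')"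
    using reach[OF u, where P="\<lambda>w. f (p, w)"] step by blast
  have cols: "f (m, v) = f (m, v')" if m: "m \<in> zn n" and v: "v \<in> zn n" and v': "v' \<in> zn n" for m v v'
  proof -
    define q where "q = (m - p) mod N"
    have "Jp (p + q) = Jp m" unfolding q_def by (rule Jp_cong) (simp add: mod_simps)
    then have jq: "Jp (p + q - 0) = Jp m" by simp
    have e: "sig6 n J (0, q) (p, (w + Jp m) mod N) = (m, w)" if "w \<in> zn n" for w
      using jq m that by (simp add: sig6_S q_def mod_simps)
    have "f (sig6 n J (0, q) (p, (v + Jp m) mod N)) = f (sig6 n J (0, q) (p, (v' + Jp m) mod N))"
    proof -
      have "f (p, (v + Jp m) mod N) = f (p, (v' + Jp m) mod N)" by (rule colp) simp_all
      then show ?thesis by (rule hB[rotated 3]) (simp_all add: p q_def)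
    qed
    then show ?thesis using e v v' by simp
  qed
  show ?thesis
  proof
    fix y assume y: "y \<in> X"
    obtain m v where y0: "y = (m, v)" by (cases y)
    have z: "(0::int) \<in> zn n" using N_pos by (simp add: zn_iff)
    have "f (0, m) = f (0, 0)" using cols[of 0 m 0] z y y0 by auto
    then have "f (sig6 n J (0, m) (0, 0)) = f (sig6 n J (0, 0) (0, 0))"
      by (intro hA) (use y y0 z in auto)
    then have "f (m, (- Jp m) mod N) = f (0, (- Jp 0) mod N)" using y y0 by (simp add: sig6_S)
    then show "f y = f (0, 0)" using cols y y0 z by (metis mem_Sigma_iff mod_zn)
  qed
qed

lemma const_if_noninj:
  assumes ni: "\<not> inj_on f X"
  shows "\<forall>y\<in>X. f y = f (0, 0)"
proof -
  obtain x x' where xX: "x \<in> X" and x'X: "x' \<in> X" and ne: "x \<noteq> x'" and fe: "f x = f x'"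
    using ni unfolding inj_on_def by blast
  obtain i a where x0: "x = (i, a)" by (cases x)
  obtain i' a' where x'0: "x' = (i', a')" by (cases x')
  have i: "i \<in> zn n" "a \<in> zn n" using xX x0 by auto
  have i': "i' \<in> zn n" "a' \<in> zn n" using x'X x'0 by auto
  show ?thesis
  proof (cases "i = i'")
    case True
    then have aa: "a \<noteq> a'" using ne x0 x'0 by simp
    have "f (sinv x (0,0)) = f (sinv x' (0,0))" by (rule hAinv[OF xX x'X _ fe]) simp
    then have "f ((- a) mod N, Jp (- i)) = f ((- a') mod N, Jp (- i))"
      using True x0 x'0 by (simp add: sinv_simp)
    moreover have "(- a) mod N \<noteq> (- a') mod N" using neg_inj i(2) i'(2) aa by blast
    ultimately show ?thesis by (intro const_from_row[of "(- a) mod N" "(- a') mod N" "Jp (- i)"]) (simp_all add: Jp_range)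
  next
    case False
    define dl where "dl = (i' - i) mod N"
    have dl0: "dl \<noteq> 0" using zn_ne[OF i'(1) i(1)] False by (simp add: dl_def)
    obtain u where u: "((J 0 - J dl) * u) mod N = 1" using Hinv dl0 mod_zn dl_def by blast
    define dd where "dd = J 0 - J dl"
    define cc where "cc = a' - a"
    have claim: "\<exists>b\<in>zn n. f (i, b) = f (i', (b + cc + int t * dd) mod N)" for t
    proof (induction t)
      case 0
      show ?case using i i' fe x0 x'0 by (intro bexI[of _ a]) (simp_all add: cc_def)
    next
      case (Suc t)
      then obtain b where b: "b \<in> zn n" and fb: "f (i, b) = f (i', (b + cc + int t * dd) mod N)" by blast
      define b1 where "b1 = (b - J 0) mod N"
      have "f (sig6 n J (i, 0) (i, b)) = f (sig6 n J (i, 0) (i', (b + cc + int t * dd) mod N))"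
        by (rule hB[OF _ _ _ fb]) (simp_all add: i i' b)
      moreover have "sig6 n J (i, 0) (i, b) = (i, b1)" using i by (simp add: sig6_S b1_def)
      moreover have "sig6 n J (i, 0) (i', (b + cc + int t * dd) mod N) = (i', ((b + cc + int t * dd) mod N - J dl) mod N)"
        using i' by (simp add: sig6_S dl_def Jp_def)
      moreover have "((b + cc + int t * dd) mod N - J dl) mod N = (b1 + cc + int (Suc t) * dd) mod N"
      proof -
        have "((b + cc + int t * dd) mod N - J dl) mod N = (b + cc + int t * dd - J dl) mod N"
          by (simp add: mod_diff_left_eq)
        also have "b + cc + int t * dd - J dl = (b - J 0) + cc + int (Suc t) * dd"
          by (simp add: dd_def algebra_simps)
        also have "((b - J 0) + cc + int (Suc t) * dd) mod N = (b1 + cc + int (Suc t) * dd) mod N"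
          unfolding b1_def by (intro mod_add_cong) simp_all
        finally show ?thesis .
      qed
      ultimately have "f (i, b1) = f (i', (b1 + cc + int (Suc t) * dd) mod N)" by simp
      then show ?case unfolding b1_def by (intro bexI[of _ "(b - J 0) mod N"]) simp_all
    qed
    obtain t :: nat where t: "\<forall>w. (w + int t * dd) mod N = (w + - cc) mod N"
      using choose_t[OF u[folded dd_def]] by blast
    obtain b where b: "b \<in> zn n" and fb: "f (i, b) = f (i', (b + cc + int t * dd) mod N)" using claim by blast
    have "(b + cc + int t * dd) mod N = b" using t[rule_format, of "b + cc"] b by simp
    then have "f (i, b) = f (i', b)" using fb by simp
    then show ?thesis by (rule const_from_row[OF i(1) i'(1) b False])
  qed
qed

end

lemma simple:
  assumes Hinv: "\<forall>i \<in> zn n. i \<noteq> 0 \<longrightarrow> (\<exists>u \<in> zn n. ((J 0 - J i) * u) mod int n = 1)"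
  shows "simple_sol TYPE('b) X (r6 n J)"
  unfolding simple_sol_def
proof (intro conjI allI impI)
  have "card (zn n) = n" by (simp add: zn_def)
  then have "card X = n * n" by (simp add: card_cartesian_product)
  then show "card X > 1" using n_gt by (metis less_1_mult)
next
  fix Y :: "'b set" and s f
  assume a: "is_solution Y s \<and> sol_hom X (r6 n J) Y s f \<and> f ` X = Y"
  show "bij_betw f X Y \<or> card Y = 1"
  proof (cases "inj_on f X")
    case True then show ?thesis using a by (simp add: bij_betw_def)
  next
    case False
    have c: "\<forall>y\<in>X. f y = f (0, 0)" using const_if_noninj[OF _ _ Hinv False] a by blast
    have z: "(0, 0) \<in> X" by simp
    have "f ` X = {f (0, 0)}"
    proof
      show "f ` X \<subseteq> {f (0, 0)}" using c by blast
      show "{f (0, 0)} \<subseteq> f ` X" using z by blast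
    qed
    then have "Y = {f (0, 0)}" using a by simp
    then show ?thesis by simp
  qed
qed

end

theorem mainTheorem6:
  fixes n :: nat and J :: "int \<Rightarrow> int"
  assumes n_gt: "n > 1"
    and J_range: "\<forall>i \<in> zn n. J i \<in> zn n"
    and J_sym: "\<forall>i \<in> zn n. J ((- i) mod int n) = J i"
    and J_shift: "\<forall>i \<in> zn n. i \<noteq> 0 \<longrightarrow> (\<exists>k \<in> zn n. J ((i + k) mod int n) \<noteq> J k)"
    and J_gen: "generate (integer_mod_group n) (J ` zn n) = carrier (integer_mod_group n)"
  shows "is_solution (zn n \<times> zn n) (r6 n J)
       \<and> indecomposable (zn n \<times> zn n) (r6 n J)
       \<and> irretractable (zn n \<times> zn n) (r6 n J)
       \<and> ((\<forall>i \<in> zn n. i \<noteq> 0 \<longrightarrow> (\<exists>u \<in> zn n. ((J 0 - J i) * u) mod int n = 1))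
          \<longrightarrow> simple_sol TYPE('b) (zn n \<times> zn n) (r6 n J))"
proof -
  interpret sol6 n J using n_gt J_range J_sym by unfold_locales
  show ?thesis using is_sol indec[OF J_gen] irr[OF J_shift] simple by blast
qed

end
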